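(* Let $p$ be an odd prime, $\ell\geq1$, $k\geq1$. Then $|\mathcal{C}_{k+1}((\mathbb{Z}/p^\ell\mathbb{Z})^2)|\approx (p^\ell)^{2k-1}$. More precisely, the good $(k+1)$-point configurations in $(\mathbb{Z}/p^\ell\mathbb{Z})^2$ determine $\approx(p^\ell)^{2k-1}$ equivalence classes, and the bad configurations determine $o((p^\ell)^{2k-1})$ equivalence classes.
   Context: For $R=\mathbb{Z}/p^\ell\mathbb{Z}$ and $x=(x_1,x_2),y=(y_1,y_2)\in R^2$, write $y^\perp=(y_2,-y_1)$, so $x\cdot y^\perp=x_1y_2-x_2y_1$. A $(k+1)$-point configuration is $x=(x^1,\dots,x^{k+1})\in(R^2)^{k+1}$; it is good if $x^i\cdot x^{j\perp}$ is a unit for some $i,j$, and bad otherwise. Two configurations $x,y$ are equivalent iff $x^i\cdot x^{j\perp}=y^i\cdot y^{j\perp}$ for all pairs $i,j$; $\mathcal{C}_{k+1}(R^2)$ is the set of equivalence classes (and goodness/badness is constant on classes). $X\approx Y$ means $C^{-1}Y\leq X\leq CY$ with $C$ independent of $p$ and $\ell$ (possibly depending on $k$); $o(Y)$ denotes a quantity whose ratio to $Y$ tends to $0$ as $p\to\infty$. *)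

theory Defs
  imports "HOL-Number_Theory.Number_Theory"
begin

text \<open>Elements of Z/mZ are represented by integers in {0..<m}; points of R^2 by pairs.
  A (k+1)-point configuration is a function from indices {0..k} to points,
  extended by (0,0) outside {0..k} so that configurations are uniquely represented.\<close>

definition residues_set :: "nat \<Rightarrow> int set" where
  "residues_set m = {0..<int m}"

definition configs :: "nat \<Rightarrow> nat \<Rightarrow> (nat \<Rightarrow> int \<times> int) set" where
  "configs m k = {x. (\<forall>i\<le>k. fst (x i) \<in> residues_set m \<and> snd (x i) \<in> residues_set m)
                      \<and> (\<forall>i>k. x i = (0, 0))}"

definition perp_dot :: "nat \<Rightarrow> int \<times> int \<Rightarrow> int \<times> int \<Rightarrow> int" where
  "perp_dot m x y = (fst x * snd y - snd x * fst y) mod int m"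

definition is_unit_mod :: "nat \<Rightarrow> int \<Rightarrow> bool" where
  "is_unit_mod m a \<longleftrightarrow> (\<exists>b. [a * b = 1] (mod int m))"

definition good_config :: "nat \<Rightarrow> nat \<Rightarrow> (nat \<Rightarrow> int \<times> int) \<Rightarrow> bool" where
  "good_config m k x \<longleftrightarrow> (\<exists>i\<le>k. \<exists>j\<le>k. is_unit_mod m (perp_dot m (x i) (x j)))"

definition config_equiv :: "nat \<Rightarrow> nat \<Rightarrow> ((nat \<Rightarrow> int \<times> int) \<times> (nat \<Rightarrow> int \<times> int)) set" where
  "config_equiv m k = {(x, y). x \<in> configs m k \<and> y \<in> configs m k \<and>
      (\<forall>i\<le>k. \<forall>j\<le>k. perp_dot m (x i) (x j) = perp_dot m (y i) (y j))}"

definition config_classes :: "nat \<Rightarrow> nat \<Rightarrow> (nat \<Rightarrow> int \<times> int) set set" where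
  "config_classes m k = configs m k // config_equiv m k"

definition good_classes :: "nat \<Rightarrow> nat \<Rightarrow> (nat \<Rightarrow> int \<times> int) set set" where
  "good_classes m k = {c \<in> config_classes m k. \<forall>x\<in>c. good_config m k x}"

definition bad_classes :: "nat \<Rightarrow> nat \<Rightarrow> (nat \<Rightarrow> int \<times> int) set set" where
  "bad_classes m k = {c \<in> config_classes m k. \<forall>x\<in>c. \<not> good_config m k x}"

end

theory Submission imports Defs begin

definition det2 :: "int \<times> int \<Rightarrow> int \<times> int \<Rightarrow> int" where
  "det2 x y = fst x * snd y - snd x * fst y"

definition dmat :: "nat \<Rightarrow> nat \<Rightarrow> (nat \<Rightarrow> int \<times> int) \<Rightarrow> nat \<Rightarrow> nat \<Rightarrow> int" where
  "dmat m k x = (\<lambda>i j. if i \<le> k \<and> j \<le> k then perp_dot m (x i) (x j) else 0)"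

lemma perp_dot_det2: "perp_dot m x y = det2 x y mod int m"
  by (simp add: perp_dot_def det2_def)

lemma plucker: "det2 A B * det2 I J = det2 A I * det2 B J - det2 A J * det2 B I"
  unfolding det2_def by (simp add: algebra_simps)

lemma dmat_eq_iff:
  "dmat m k x = dmat m k y \<longleftrightarrow> (\<forall>i\<le>k. \<forall>j\<le>k. perp_dot m (x i) (x j) = perp_dot m (y i) (y j))"
  unfolding dmat_def by (auto simp: fun_eq_iff)

lemma equiv_iff:
  "(x, y) \<in> config_equiv m k \<longleftrightarrow> x \<in> configs m k \<and> y \<in> configs m k \<and> dmat m k x = dmat m k y"
  unfolding config_equiv_def dmat_eq_iff by simp

lemma class_card:
  assumes inv: "\<And>x y. x \<in> configs m k \<Longrightarrow> y \<in> configs m k \<Longrightarrow> dmat m k x = dmat m k y \<Longrightarrow> P x \<Longrightarrow> P y"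
  shows "card {c \<in> config_classes m k. \<forall>x\<in>c. P x} = card (dmat m k ` {x \<in> configs m k. P x})"
proof -
  let ?S = "configs m k" and ?R = "config_equiv m k"
  have cls: "?R `` {x} = {y \<in> ?S. dmat m k y = dmat m k x}" if "x \<in> ?S" for x
    using that by (auto simp: equiv_iff)
  define f where "f c = the_elem (dmat m k ` c)" for c
  have fc: "f (?R `` {x}) = dmat m k x" if "x \<in> ?S" for x
  proof -
    have "dmat m k ` (?R `` {x}) = {dmat m k x}" using cls[OF that] that by auto
    then show ?thesis by (simp add: f_def)
  qed
  have A: "{c \<in> config_classes m k. \<forall>x\<in>c. P x} = (\<lambda>x. ?R `` {x}) ` {x \<in> ?S. P x}"
  proof (intro Set.set_eqI iffI)
    fix c assume "c \<in> {c \<in> config_classes m k. \<forall>x\<in>c. P x}"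
    then obtain x where x: "x \<in> ?S" "c = ?R `` {x}" and P: "\<forall>y\<in>c. P y"
      by (auto simp: config_classes_def quotient_def)
    have "x \<in> c" using x by (auto simp: equiv_iff)
    then show "c \<in> (\<lambda>x. ?R `` {x}) ` {x \<in> ?S. P x}" using x P by auto
  next
    fix c assume "c \<in> (\<lambda>x. ?R `` {x}) ` {x \<in> ?S. P x}"
    then obtain x where x: "x \<in> ?S" "P x" "c = ?R `` {x}" by auto
    have "\<forall>y\<in>c. P y" using x inv cls by auto
    then show "c \<in> {c \<in> config_classes m k. \<forall>x\<in>c. P x}"
      using x by (auto simp: config_classes_def quotient_def)
  qed
  have inj: "inj_on f {c \<in> config_classes m k. \<forall>x\<in>c. P x}"
    unfolding A inj_on_def
  proof (clarify)
    fix x y assume "x \<in> ?S" "P x" "y \<in> ?S" "P y" "f (?R `` {x}) = f (?R `` {y})"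
    then have "dmat m k x = dmat m k y" by (simp add: fc)
    then show "?R `` {x} = ?R `` {y}" using cls \<open>x \<in> ?S\<close> \<open>y \<in> ?S\<close> by auto
  qed
  have img: "f ` {c \<in> config_classes m k. \<forall>x\<in>c. P x} = dmat m k ` {x \<in> configs m k. P x}"
    unfolding A image_image by (rule image_cong) (auto simp: fc)
  show ?thesis using card_image[OF inj] img by simp
qed

lemma plucker_mod:
  fixes P :: int and v w :: nat and x :: "nat \<Rightarrow> int \<times> int" and D :: "nat \<Rightarrow> nat \<Rightarrow> int"
  assumes P: "P > 0"
    and D: "\<And>s t. s \<in> {a,b,i,j} \<Longrightarrow> t \<in> {a,b,i,j} \<Longrightarrow> D s t = det2 (x s) (x t) mod (P^v * P^w)"
    and dv: "\<And>s t. s \<in> {a,b,i,j} \<Longrightarrow> t \<in> {a,b,i,j} \<Longrightarrow> P^v dvd D s t"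
  shows "[(D a b div P^v) * (D i j div P^v) = (D a i div P^v) * (D b j div P^v) - (D a j div P^v) * (D b i div P^v)] (mod P^w)"
proof -
  define V where "V = P^v"
  define W where "W = P^w"
  define e where "e s t = D s t div V" for s t
  define f where "f s t = det2 (x s) (x t) div (V * W)" for s t
  have key: "det2 (x s) (x t) = V * (e s t + W * f s t)" if "s \<in> {a,b,i,j}" "t \<in> {a,b,i,j}" for s t
  proof -
    have "det2 (x s) (x t) = D s t + (V*W) * f s t"
      using D[OF that] unfolding f_def V_def W_def by simp
    also have "D s t = V * e s t" using dv[OF that] unfolding e_def V_def by simp
    finally show ?thesis by (simp add: algebra_simps)
  qed
  have V0: "V \<noteq> 0" using P by (simp add: V_def)
  have "(V * (e a b + W * f a b)) * (V * (e i j + W * f i j)) =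
        (V * (e a i + W * f a i)) * (V * (e b j + W * f b j)) - (V * (e a j + W * f a j)) * (V * (e b i + W * f b i))"
    using plucker[of "x a" "x b" "x i" "x j"] by (simp add: key)
  then have "(V*V) * ((e a b + W * f a b) * (e i j + W * f i j)) =
        (V*V) * ((e a i + W * f a i) * (e b j + W * f b j) - (e a j + W * f a j) * (e b i + W * f b i))"
    by (simp add: algebra_simps)
  then have eq: "(e a b + W * f a b) * (e i j + W * f i j) =
        (e a i + W * f a i) * (e b j + W * f b j) - (e a j + W * f a j) * (e b i + W * f b i)"
    using V0 by simp
  have "e a b * e i j - (e a i * e b j - e a j * e b i) = W * (
        - (e a b * f i j + f a b * e i j + W * f a b * f i j)
        + (e a i * f b j + f a i * e b j + W * f a i * f b j)
        - (e a j * f b i + f a j * e b i + W * f a j * f b i))"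
    using eq by (simp add: algebra_simps)
  then have "W dvd e a b * e i j - (e a i * e b j - e a j * e b i)" by (metis dvd_triv_left)
  then show ?thesis unfolding cong_iff_dvd_diff e_def V_def W_def .
qed

definition Dset :: "nat \<Rightarrow> nat \<Rightarrow> nat \<Rightarrow> nat \<Rightarrow> nat \<Rightarrow> nat \<Rightarrow> (nat \<Rightarrow> nat \<Rightarrow> int) set" where
  "Dset p l k a b v = {D \<in> dmat (p^l) k ` configs (p^l) k.
     (\<forall>i\<le>k. \<forall>j\<le>k. int p ^ v dvd D i j) \<and> \<not> int p ^ Suc v dvd D a b}"

lemma dmat_range:
  assumes "m > 0" shows "0 \<le> dmat m k x i j \<and> dmat m k x i j < int m"
  using assms by (simp add: dmat_def perp_dot_def)

lemma dmat_diag: "dmat m k x i i = 0"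
  by (simp add: dmat_def perp_dot_def)

lemma dmat_swap: "dmat m k x j i = (- dmat m k x i j) mod int m"
  by (simp add: dmat_def perp_dot_def mod_minus_eq algebra_simps)

lemma dmat_mod: "dmat m k x i j mod int m = dmat m k x i j"
  by (simp add: dmat_def perp_dot_def)

lemma dmat_det: "i \<le> k \<Longrightarrow> j \<le> k \<Longrightarrow> dmat m k x i j = det2 (x i) (x j) mod int m"
  by (simp add: dmat_def perp_dot_det2)

lemma dmat_out: "\<not> (i \<le> k \<and> j \<le> k) \<Longrightarrow> dmat m k x i j = 0"
  by (auto simp: dmat_def)

lemma eq_of_cong_range:
  fixes a b m :: int
  assumes "a mod m = a" "b mod m = b" "m dvd a - b" shows "a = b"
  using assms by (metis cong_iff_dvd_diff cong_def)

lemma prime_int_not_dvd_coprime: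
  assumes "prime p" "\<not> int p dvd e" shows "coprime e (int p ^ n)"
proof -
  have "prime (int p)" using assms(1) by simp
  then have "coprime (int p) e" using assms(2) prime_imp_coprime by blast
  then show ?thesis by (simp add: ac_simps)
qed

lemma dset_inj:
  assumes p: "prime p" and v: "v < l" and ab: "a \<le> k" "b \<le> k"
    and D1: "D1 \<in> Dset p l k a b v" and D2: "D2 \<in> Dset p l k a b v"
    and rows: "\<And>i. i \<le> k \<Longrightarrow> D1 a i = D2 a i \<and> D1 b i = D2 b i"
  shows "D1 = D2"
proof (intro ext)
  fix i j
  define P where "P = int p"
  define w where "w = l - v"
  have Q: "int (p^l) = P^v * P^w" using v unfolding P_def w_def by (simp add: power_add[symmetric])
  obtain x where x: "x \<in> configs (p^l) k" "D1 = dmat (p^l) k x" using D1 by (auto simp: Dset_def)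
  obtain y where y: "y \<in> configs (p^l) k" "D2 = dmat (p^l) k y" using D2 by (auto simp: Dset_def)
  have dv1: "\<And>s t. s \<le> k \<Longrightarrow> t \<le> k \<Longrightarrow> P^v dvd D1 s t" using D1 by (auto simp: Dset_def P_def)
  have dv2: "\<And>s t. s \<le> k \<Longrightarrow> t \<le> k \<Longrightarrow> P^v dvd D2 s t" using D2 by (auto simp: Dset_def P_def)
  have nd: "\<not> P ^ Suc v dvd D1 a b" using D1 by (auto simp: Dset_def P_def)
  show "D1 i j = D2 i j"
  proof (cases "i \<le> k \<and> j \<le> k")
    case False
    then show ?thesis using x y by (simp add: dmat_out)
  next
    case True
    have P0: "P > 0" using p prime_gt_0_nat unfolding P_def by simp
    have c1: "[(D1 a b div P^v) * (D1 i j div P^v) = (D1 a i div P^v) * (D1 b j div P^v) - (D1 a j div P^v) * (D1 b i div P^v)] (mod P^w)"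
      by (rule plucker_mod[OF P0, where x=x]) (use True ab x dv1 Q in \<open>auto simp: dmat_det\<close>)
    have c2: "[(D2 a b div P^v) * (D2 i j div P^v) = (D2 a i div P^v) * (D2 b j div P^v) - (D2 a j div P^v) * (D2 b i div P^v)] (mod P^w)"
      by (rule plucker_mod[OF P0, where x=y]) (use True ab y dv2 Q in \<open>auto simp: dmat_det\<close>)
    have c3: "[(D1 a b div P^v) * (D1 i j div P^v) = (D1 a b div P^v) * (D2 i j div P^v)] (mod P^w)"
    proof -
      have r: "D2 a b = D1 a b" "D2 a i = D1 a i" "D2 b j = D1 b j" "D2 a j = D1 a j" "D2 b i = D1 b i"
        using rows True ab by auto
      have "[(D1 a b div P^v) * (D2 i j div P^v) = (D1 a i div P^v) * (D1 b j div P^v) - (D1 a j div P^v) * (D1 b i div P^v)] (mod P^w)"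
        using c2 unfolding r .
      then show ?thesis using c1 cong_sym cong_trans by blast
    qed
    have Dab: "D1 a b = P^v * (D1 a b div P^v)" using dv1 ab by simp
    have "\<not> P dvd (D1 a b div P^v)"
    proof
      assume "P dvd (D1 a b div P^v)"
      then have "P^v * P dvd D1 a b" using Dab by (metis mult_dvd_mono dvd_refl)
      then show False using nd by (simp add: ac_simps)
    qed
    then have cop: "coprime (D1 a b div P^v) (P^w)" using prime_int_not_dvd_coprime[OF p] P_def by simp
    have "[D1 i j div P^v = D2 i j div P^v] (mod P^w)"
      using c3 cong_mult_lcancel[OF cop] by simp
    then have "P^w dvd D1 i j div P^v - D2 i j div P^v" by (simp add: cong_iff_dvd_diff)
    then have "P^v * P^w dvd P^v * (D1 i j div P^v - D2 i j div P^v)" by simp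
    also have "P^v * (D1 i j div P^v - D2 i j div P^v) = D1 i j - D2 i j"
      using dv1[of i j] dv2[of i j] True by (simp add: right_diff_distrib)
    finally have "int (p^l) dvd D1 i j - D2 i j" using Q by simp
    then show ?thesis using x y dmat_mod[of "p^l" k x i j] dmat_mod[of "p^l" k y i j]
      eq_of_cong_range[of "D1 i j" "int (p^l)" "D2 i j"] by simp
  qed
qed

lemma dset_card:
  assumes p: "prime p" and v: "v < l" and ab: "a \<le> k" "b \<le> k" and k: "k \<ge> 1"
  shows "finite (Dset p l k a b v) \<and> card (Dset p l k a b v) \<le> (p^(l-v))^(2*k-1)"
proof (cases "a = b")
  case True
  have "Dset p l k a b v = {}" using True by (auto simp: Dset_def dmat_diag)
  then show ?thesis by simp
next
  case False
  define P where "P = int p"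
  define W where "W = p^(l-v)"
  define I where "I = {..k} - {a,b}"
  define G where "G D = (D a b div P^v, restrict (\<lambda>i. D a i div P^v) I, restrict (\<lambda>i. D b i div P^v) I)"
    for D :: "nat \<Rightarrow> nat \<Rightarrow> int"
  define B where "B = {0..<int W} \<times> (PiE I (\<lambda>_. {0..<int W})) \<times> (PiE I (\<lambda>_. {0..<int W}))"
  have Q: "int (p^l) = P^v * int W" using v unfolding P_def W_def by (simp add: power_add[symmetric])
  have P0: "P > 0" using p prime_gt_0_nat unfolding P_def by simp
  have Wpos: "int W > 0" using p prime_gt_0_nat unfolding W_def by simp
  have divr: "D s t div P^v \<in> {0..<int W}" if Din: "D \<in> Dset p l k a b v" "s \<le> k" "t \<le> k" for D s t
  proof -
    obtain x where x: "D = dmat (p^l) k x" using Din(1) unfolding Dset_def by blast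
    have r: "0 \<le> D s t" "D s t < P^v * int W"
      using dmat_range[of "p^l" k x s t] p prime_gt_0_nat x Q by auto
    have d: "P^v dvd D s t" using Din by (auto simp: Dset_def P_def)
    then obtain e where e: "D s t = P^v * e" by blast
    have Pv: "P^v > 0" using P0 by simp
    have "0 \<le> e" using r e Pv by (simp add: zero_le_mult_iff)
    moreover have "e < int W" using r e P0 by (simp add: mult_less_cancel_left)
    ultimately show ?thesis using e P0 by simp
  qed
  have sub: "G ` Dset p l k a b v \<subseteq> B"
  proof
    fix z assume "z \<in> G ` Dset p l k a b v"
    then obtain D where D: "D \<in> Dset p l k a b v" and z: "z = G D" by blast
    have "\<forall>i\<in>I. D a i div P^v \<in> {0..<int W}" "\<forall>i\<in>I. D b i div P^v \<in> {0..<int W}"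
      using divr[OF D] ab by (auto simp: I_def)
    then show "z \<in> B" unfolding z G_def B_def using divr[OF D ab] by (simp add: restrict_PiE_iff)
  qed
  have inj: "inj_on G (Dset p l k a b v)"
  proof (rule inj_onI)
    fix D1 D2 assume D1: "D1 \<in> Dset p l k a b v" and D2: "D2 \<in> Dset p l k a b v" and G: "G D1 = G D2"
    have dv1: "\<And>s t. s \<le> k \<Longrightarrow> t \<le> k \<Longrightarrow> D1 s t = P^v * (D1 s t div P^v)" using D1 by (auto simp: Dset_def P_def)
    have dv2: "\<And>s t. s \<le> k \<Longrightarrow> t \<le> k \<Longrightarrow> D2 s t = P^v * (D2 s t div P^v)" using D2 by (auto simp: Dset_def P_def)
    have eab: "D1 a b = D2 a b" using G dv1[OF ab] dv2[OF ab] by (simp add: G_def)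
    obtain x where x: "D1 = dmat (p^l) k x" using D1 by (auto simp: Dset_def)
    obtain y where y: "D2 = dmat (p^l) k y" using D2 by (auto simp: Dset_def)
    have rowI: "D1 a i = D2 a i \<and> D1 b i = D2 b i" if "i \<in> I" for i
    proof -
      have "restrict (\<lambda>i. D1 a i div P^v) I i = restrict (\<lambda>i. D2 a i div P^v) I i"
           "restrict (\<lambda>i. D1 b i div P^v) I i = restrict (\<lambda>i. D2 b i div P^v) I i"
        using G by (auto simp: G_def)
      then have "D1 a i div P^v = D2 a i div P^v" "D1 b i div P^v = D2 b i div P^v" using that by auto
      moreover have "i \<le> k" using that by (auto simp: I_def)
      ultimately show ?thesis using dv1 dv2 ab by metis
    qed
    show "D1 = D2"
    proof (rule dset_inj[OF p v ab D1 D2])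
      fix i assume i: "i \<le> k"
      show "D1 a i = D2 a i \<and> D1 b i = D2 b i"
      proof (cases "i \<in> I")
        case True then show ?thesis using rowI by blast
      next
        case False
        then have "i = a \<or> i = b" using i by (auto simp: I_def)
        then show ?thesis
        proof
          assume "i = a"
          then show ?thesis using eab x y dmat_swap[of "p^l" k x b a] dmat_swap[of "p^l" k y b a]
            by (simp add: dmat_diag)
        next
          assume "i = b"
          then show ?thesis using eab x y by (simp add: dmat_diag)
        qed
      qed
    qed
  qed
  have finI: "finite I" by (simp add: I_def)
  have cardI: "card I = k - 1"
  proof -
    have "card I = card {..k} - card {a,b}" unfolding I_def using ab by (subst card_Diff_subset) auto
    then show ?thesis using False by simp
  qed
  have finB: "finite B" unfolding B_def using finI by (simp add: finite_PiE)
  have cardB: "card B = W * W^(k-1) * W^(k-1)"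
    unfolding B_def using finI cardI by (simp add: card_cartesian_product card_PiE)
  have finD: "finite (Dset p l k a b v)"
    using inj sub finB by (meson finite_imageD finite_subset)
  have "card (Dset p l k a b v) = card (G ` Dset p l k a b v)" using card_image[OF inj] by simp
  also have "\<dots> \<le> card B" using card_mono[OF finB sub] .
  also have "\<dots> = W^(2*k-1)" unfolding cardB using k
    by (metis (no_types, lifting) Suc_diff_1 less_le_trans less_numeral_extra(1) mult_2 power_Suc power_add
        diff_Suc_1 add_diff_assoc mult.assoc)
  finally show ?thesis using finD W_def by simp
qed

lemma geom_bound:
  fixes x :: nat assumes "x \<ge> 2"
  shows "(\<Sum>v<n. x^(n-v)) \<le> 2 * x^n"
proof (induction n)
  case 0 then show ?case by simp
next
  case (Suc n)
  have "(\<Sum>v<Suc n. x^(Suc n-v)) = x^(Suc n) + (\<Sum>v<n. x^(n-v))"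
    by (subst sum.lessThan_Suc_shift) simp
  also have "\<dots> \<le> x^(Suc n) + 2 * x^n" using Suc by simp
  also have "\<dots> \<le> 2 * x^(Suc n)" using assms by simp
  finally show ?case .
qed

lemma geom_bound1:
  fixes x :: nat assumes "x \<ge> 2" "l \<ge> 1"
  shows "(\<Sum>v\<in>{1..<l}. x^(l-v)) \<le> 2 * x^(l-1)"
proof -
  obtain n where l: "l = Suc n" using assms(2) by (cases l) auto
  have "(\<Sum>v\<in>{1..<l}. x^(l-v)) = (\<Sum>v\<in>{0..<n}. x^(l - Suc v))"
    unfolding l by (subst sum.shift_bounds_Suc_ivl[symmetric]) simp
  also have "\<dots> = (\<Sum>v<n. x^(n-v))" by (simp add: l atLeast0LessThan)
  also have "\<dots> \<le> 2 * x^n" by (rule geom_bound[OF assms(1)])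
  finally show ?thesis using l by simp
qed

lemma cover:
  assumes p: "prime p" and l: "l \<ge> 1"
    and D: "D \<in> dmat (p^l) k ` configs (p^l) k" and nz: "D \<noteq> (\<lambda>i j. 0)"
    and v0: "\<forall>i\<le>k. \<forall>j\<le>k. int p ^ v0 dvd D i j"
  shows "\<exists>a\<le>k. \<exists>b\<le>k. \<exists>v\<in>{v0..<l}. D \<in> Dset p l k a b v"
proof -
  define P where "P = int p"
  obtain x where x: "D = dmat (p^l) k x" using D by blast
  have "\<exists>a0 b0. D a0 b0 \<noteq> 0" using nz by (auto simp: fun_eq_iff)
  then obtain a0 b0 where ne: "D a0 b0 \<noteq> 0" by blast
  then have ab0: "a0 \<le> k" "b0 \<le> k" using x dmat_out by blast+
  have rng: "0 < D a0 b0" "D a0 b0 < P^l"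
    using dmat_range[of "p^l" k x a0 b0] ne p prime_gt_0_nat x unfolding P_def by auto
  define V where "V = {v. \<forall>i\<le>k. \<forall>j\<le>k. P^v dvd D i j}"
  have Vl: "v < l" if "v \<in> V" for v
  proof -
    have "P^v dvd D a0 b0" using that ab0 by (auto simp: V_def)
    then have "P^v \<le> D a0 b0" using rng by (simp add: zdvd_imp_le)
    then have "P^v < P^l" using rng by simp
    moreover have "P > 1" using p prime_gt_1_nat unfolding P_def by simp
    ultimately show ?thesis by (simp add: power_strict_increasing_iff)
  qed
  have finV: "finite V" by (rule finite_subset[of V "{..<l}"]) (use Vl in auto)
  have v0V: "v0 \<in> V" using v0 by (simp add: V_def P_def)
  define v where "v = Max V"
  have vV: "v \<in> V" using Max_in[OF finV] v0V unfolding v_def by blast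
  have vge: "v0 \<le> v" using finV v0V by (simp add: v_def)
  have "Suc v \<notin> V" using Max_ge[OF finV] v_def by fastforce
  then obtain a b where ab: "a \<le> k" "b \<le> k" "\<not> P^Suc v dvd D a b" by (auto simp: V_def)
  have "D \<in> Dset p l k a b v" using D vV ab by (auto simp: Dset_def V_def P_def)
  moreover have "v \<in> {v0..<l}" using vge Vl[OF vV] by simp
  ultimately show ?thesis using ab(1,2) by blast
qed

lemma cover_card:
  assumes p: "prime p" and l: "l \<ge> 1" and k: "k \<ge> 1"
    and S: "S \<subseteq> dmat (p^l) k ` configs (p^l) k"
    and v0: "\<forall>D\<in>S. \<forall>i\<le>k. \<forall>j\<le>k. int p ^ v0 dvd D i j"
  shows "finite S \<and> card S \<le> 1 + (k+1)*(k+1)*(\<Sum>v\<in>{v0..<l}. (p^(l-v))^(2*k-1))"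
proof -
  define U where "U = (\<Union>a\<in>{..k}. \<Union>b\<in>{..k}. \<Union>v\<in>{v0..<l}. Dset p l k a b v)"
  have sub: "S \<subseteq> insert (\<lambda>i j. 0) U"
  proof
    fix D assume DS: "D \<in> S"
    show "D \<in> insert (\<lambda>i j. 0) U"
    proof (cases "D = (\<lambda>i j. 0)")
      case True then show ?thesis by simp
    next
      case False
      have "D \<in> dmat (p^l) k ` configs (p^l) k" using DS S by blast
      from cover[OF p l this False] DS v0
      obtain a b v where "a \<le> k" "b \<le> k" "v \<in> {v0..<l}" "D \<in> Dset p l k a b v" by blast
      then show ?thesis unfolding U_def by blast
    qed
  qed
  have fin: "finite (Dset p l k a b v)" if "a \<le> k" "b \<le> k" "v \<in> {v0..<l}" for a b v
    using dset_card[OF p _ that(1,2) k] that by auto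
  have finU: "finite U" unfolding U_def using fin by auto
  have "card U \<le> (\<Sum>a\<in>{..k}. card (\<Union>b\<in>{..k}. \<Union>v\<in>{v0..<l}. Dset p l k a b v))"
    unfolding U_def by (rule card_UN_le) simp
  also have "\<dots> \<le> (\<Sum>a\<in>{..k}. \<Sum>b\<in>{..k}. card (\<Union>v\<in>{v0..<l}. Dset p l k a b v))"
    by (rule sum_mono, rule card_UN_le) simp
  also have "\<dots> \<le> (\<Sum>a\<in>{..k}. \<Sum>b\<in>{..k}. \<Sum>v\<in>{v0..<l}. card (Dset p l k a b v))"
  proof (rule sum_mono)+
    fix a b assume "a \<in> {..k}" "b \<in> {..k}"
    show "card (\<Union>v\<in>{v0..<l}. Dset p l k a b v) \<le> (\<Sum>v\<in>{v0..<l}. card (Dset p l k a b v))"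
      by (rule card_UN_le) simp
  qed
  also have "\<dots> \<le> (\<Sum>a\<in>{..k}. \<Sum>b\<in>{..k}. \<Sum>v\<in>{v0..<l}. (p^(l-v))^(2*k-1))"
  proof (rule sum_mono, rule sum_mono, rule sum_mono)
    fix a b v assume "a \<in> {..k}" "b \<in> {..k}" "v \<in> {v0..<l}"
    then show "card (Dset p l k a b v) \<le> (p^(l-v))^(2*k-1)" using dset_card[OF p _ _ _ k] by simp
  qed
  also have "\<dots> = (k+1)*(k+1)*(\<Sum>v\<in>{v0..<l}. (p^(l-v))^(2*k-1))" by (simp add: algebra_simps)
  finally have cU: "card U \<le> (k+1)*(k+1)*(\<Sum>v\<in>{v0..<l}. (p^(l-v))^(2*k-1))" .
  have fin2: "finite (insert (\<lambda>i j. 0) U)" using finU by simp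
  have "card S \<le> card (insert (\<lambda>i j. 0) U)" by (rule card_mono[OF fin2 sub])
  also have "\<dots> \<le> Suc (card U)" by (simp add: card_insert_if finU)
  finally show ?thesis using cU finite_subset[OF sub fin2] by simp
qed

definition cfg :: "nat \<Rightarrow> int \<Rightarrow> (nat \<Rightarrow> int) \<Rightarrow> (nat \<Rightarrow> int) \<Rightarrow> nat \<Rightarrow> int \<times> int" where
  "cfg k u a b = (\<lambda>i. if i = 0 then (1,0) else if i = 1 then (0,u) else if i \<le> k then (a i, b i) else (0,0))"

lemma good_lower:
  assumes p: "prime p" and l: "l \<ge> 1" and k: "k \<ge> 1"
    and fin: "finite (dmat (p^l) k ` {x \<in> configs (p^l) k. good_config (p^l) k x})"
  shows "(p^l)^(2*k-1) \<le> 2 * card (dmat (p^l) k ` {x \<in> configs (p^l) k. good_config (p^l) k x})"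
proof -
  define q where "q = p^l"
  define Q where "Q = int q"
  have q1: "q > 1" unfolding q_def using prime_gt_1_nat[OF p] l by (metis less_le_trans one_less_power zero_less_one less_one not_le)
  define U where "U = int ` totatives q"
  define A where "A = PiE {2..k} (\<lambda>_. {0..<Q})"
  define H where "H z = dmat q k (cfg k (fst z) (fst (snd z)) (snd (snd z)))" for z
  define G where "G = dmat q k ` {x \<in> configs q k. good_config q k x}"
  have Uprop: "0 < u \<and> u < Q \<and> coprime u Q" if uU: "u \<in> U" for u
  proof -
    obtain n where n: "u = int n" "n \<in> totatives q" using uU U_def by blast
    have "0 < n" "n \<le> q" "coprime n q" using n(2) by (auto simp: in_totatives_iff)
    moreover have "n \<noteq> q" using \<open>coprime n q\<close> q1 by auto
    ultimately show ?thesis using n(1) by (simp add: Q_def)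
  qed
  have D01: "dmat q k (cfg k u a b) 0 1 = u mod Q" for u a b
    using k by (simp add: dmat_def perp_dot_def cfg_def Q_def)
  have Di0: "dmat q k (cfg k u a b) i 0 = (- b i) mod Q" if "2 \<le> i" "i \<le> k" for u a b i
    using that by (simp add: dmat_def perp_dot_def cfg_def Q_def)
  have Di1: "dmat q k (cfg k u a b) i 1 = (a i * u) mod Q" if "2 \<le> i" "i \<le> k" for u a b i
    using that k by (simp add: dmat_def perp_dot_def cfg_def Q_def)
  have inconf: "cfg k u a b \<in> configs q k \<and> good_config q k (cfg k u a b)"
    if uab: "u \<in> U" "a \<in> A" "b \<in> A" for u a b
  proof
    have ab: "a i \<in> {0..<Q}" "b i \<in> {0..<Q}" if "2 \<le> i" "i \<le> k" for i
      using \<open>a \<in> A\<close> \<open>b \<in> A\<close> that by (auto simp: A_def PiE_iff)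
    show "cfg k u a b \<in> configs q k"
      unfolding configs_def residues_set_def using Uprop[OF uab(1)] q1 ab k
      by (auto simp: cfg_def Q_def)
    obtain y where "[u * y = 1] (mod Q)" using Uprop[OF uab(1)] cong_solve_coprime_int by blast
    then have "is_unit_mod q (dmat q k (cfg k u a b) 0 1)"
      unfolding D01 is_unit_mod_def Q_def by (metis cong_def mod_mult_left_eq)
    then show "good_config q k (cfg k u a b)"
      unfolding good_config_def using k by (auto simp: dmat_def)
  qed
  have sub: "H ` (U \<times> A \<times> A) \<subseteq> G"
    unfolding G_def H_def using inconf by auto
  have inj: "inj_on H (U \<times> A \<times> A)"
  proof (rule inj_onI)
    fix z z' assume z: "z \<in> U \<times> A \<times> A" and z': "z' \<in> U \<times> A \<times> A" and eqz: "H z = H z'"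
    obtain u a b where zz: "z = (u, a, b)" by (cases z) auto
    obtain u' a' b' where zz': "z' = (u', a', b')" by (cases z') auto
    have u: "u \<in> U" "u' \<in> U" and a: "a \<in> A" "a' \<in> A" and b: "b \<in> A" "b' \<in> A"
      using z z' zz zz' by auto
    have eq: "H (u, a, b) = H (u', a', b')" using eqz zz zz' by simp
    have E: "dmat q k (cfg k u a b) = dmat q k (cfg k u' a' b')" using eq by (simp add: H_def)
    have uu: "u = u'" using E D01[of u a b] D01[of u' a' b'] Uprop[OF u(1)] Uprop[OF u(2)]
      by (metis mod_pos_pos_trivial less_imp_le)
    have rng: "x i \<in> {0..<Q}" if "x \<in> A" "i \<in> {2..k}" for x i using that by (auto simp: A_def PiE_iff)
    have bb: "b i = b' i" if "i \<in> {2..k}" for i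
    proof -
      have "(- b i) mod Q = (- b' i) mod Q" using E Di0[of i u a b] Di0[of i u' a' b'] that by simp
      then have "[b i = b' i] (mod Q)" by (metis cong_def cong_minus_minus_iff)
      then show ?thesis using rng[OF b(1) that] rng[OF b(2) that] by (simp add: cong_def)
    qed
    have aa: "a i = a' i" if "i \<in> {2..k}" for i
    proof -
      have "(a i * u) mod Q = (a' i * u) mod Q" using E Di1[of i u a b] Di1[of i u' a' b'] that uu by simp
      then have "[a i * u = a' i * u] (mod Q)" by (simp add: cong_def)
      then have "[a i = a' i] (mod Q)" using cong_mult_rcancel Uprop[OF u(1)] by blast
      then show ?thesis using rng[OF a(1) that] rng[OF a(2) that] by (simp add: cong_def)
    qed
    show "z = z'" unfolding zz zz'
      using uu PiE_ext[OF a[unfolded A_def]] PiE_ext[OF b[unfolded A_def]] aa bb by blast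
  qed
  have finG: "finite G" using fin unfolding G_def q_def .
  have cU: "card U = totient q" unfolding U_def totient_def by (simp add: card_image)
  have cA: "card A = q^(k-1)" unfolding A_def Q_def by (simp add: card_PiE)
  have c0: "card (U \<times> A \<times> A) = totient q * q^(k-1) * q^(k-1)"
    by (simp add: card_cartesian_product cU cA)
  have "card (U \<times> A \<times> A) = card (H ` (U \<times> A \<times> A))" using card_image[OF inj] by simp
  also have "\<dots> \<le> card G" by (rule card_mono[OF finG sub])
  finally have c1: "totient q * q^(k-1) * q^(k-1) \<le> card G" using c0 by simp
  have tot: "totient q = p^(l-1) * (p-1)" unfolding q_def using totient_prime_power[OF p] l by simp
  have "q \<le> 2 * totient q"
  proof -
    have "q = p^(l-1) * p" unfolding q_def using l by (metis One_nat_def Suc_pred power_Suc2 zero_less_iff_neq_zero not_one_le_zero)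
    also have "\<dots> \<le> p^(l-1) * (2*(p-1))" using prime_gt_1_nat[OF p] by (intro mult_le_mono2) linarith
    finally show ?thesis using tot by (simp add: ac_simps)
  qed
  have "q^(2*k-1) = q * q^(k-1) * q^(k-1)" using k
    by (metis Suc_diff_1 mult_2 power_Suc power_add less_le_trans less_numeral_extra(1) diff_Suc_1 add_diff_assoc mult.assoc)
  also have "\<dots> \<le> 2 * totient q * q^(k-1) * q^(k-1)" using \<open>q \<le> 2 * totient q\<close> by simp
  also have "\<dots> \<le> 2 * card G" using c1 by simp
  finally show ?thesis unfolding G_def q_def .
qed

lemma good_dmat: "good_config m k x \<longleftrightarrow> (\<exists>i\<le>k. \<exists>j\<le>k. is_unit_mod m (dmat m k x i j))"
  by (auto simp: good_config_def dmat_def)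

lemma not_unit_dvd:
  assumes p: "prime p" and l: "l \<ge> 1" and nu: "\<not> is_unit_mod (p^l) d"
  shows "int p dvd d"
proof (rule ccontr)
  assume "\<not> int p dvd d"
  then have "coprime d (int p ^ l)" by (rule prime_int_not_dvd_coprime[OF p])
  then obtain y where "[d * y = 1] (mod int p ^ l)" using cong_solve_coprime_int by blast
  then show False using nu by (auto simp: is_unit_mod_def)
qed

lemma counts:
  assumes p: "prime p" and l: "l \<ge> 1" and k: "k \<ge> 1"
  shows "card (config_classes (p^l) k) \<le> (1 + 2*((k+1)*(k+1))) * (p^l)^(2*k-1)"
    and "(p^l)^(2*k-1) \<le> 2 * card (good_classes (p^l) k)"
    and "card (good_classes (p^l) k) \<le> card (config_classes (p^l) k)"
    and "card (bad_classes (p^l) k) \<le> (1 + 2*((k+1)*(k+1))) * (p^(2*k-1))^(l-1)"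
proof -
  define q where "q = p^l"
  define N where "N = 2*k-1"
  define K where "K = (k+1)*(k+1)"
  define Dall where "Dall = dmat q k ` configs q k"
  define Dg where "Dg = dmat q k ` {x \<in> configs q k. good_config q k x}"
  define Db where "Db = dmat q k ` {x \<in> configs q k. \<not> good_config q k x}"
  have inv: "good_config q k x \<longleftrightarrow> good_config q k y" if "dmat q k x = dmat q k y" for x y
    using that by (simp add: good_dmat)
  have cA: "card (config_classes q k) = card Dall"
    using class_card[of q k "\<lambda>_. True"] unfolding Dall_def by simp
  have cG: "card (good_classes q k) = card Dg"
    using class_card[of q k "good_config q k"] inv unfolding Dg_def good_classes_def by blast
  have cB: "card (bad_classes q k) = card Db"
    using class_card[of q k "\<lambda>x. \<not> good_config q k x"] inv unfolding Db_def bad_classes_def by blast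
  have pN: "p^N \<ge> 2"
  proof -
    have "p \<ge> 2" using prime_ge_2_nat[OF p] .
    moreover have "p \<le> p^N" using k prime_gt_0_nat[OF p] unfolding N_def by (simp add: self_le_power)
    ultimately show ?thesis by linarith
  qed
  have pw: "(p^(l-v))^N = (p^N)^(l-v)" for v by (simp add: power_mult[symmetric] mult.commute)
  have A: "finite Dall \<and> card Dall \<le> 1 + K * (\<Sum>v\<in>{0..<l}. (p^(l-v))^N)"
    using cover_card[OF p l k, of Dall 0] unfolding Dall_def q_def N_def K_def by simp
  have "(\<Sum>v\<in>{0..<l}. (p^(l-v))^N) = (\<Sum>v<l. (p^N)^(l-v))" by (simp add: pw atLeast0LessThan)
  also have "\<dots> \<le> 2 * (p^N)^l" by (rule geom_bound[OF pN])
  finally have sA: "(\<Sum>v\<in>{0..<l}. (p^(l-v))^N) \<le> 2 * q^N" by (metis q_def power_mult mult.commute)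
  have q1: "1 \<le> q^N" unfolding q_def using prime_gt_0_nat[OF p] by simp
  have bA: "card Dall \<le> (1 + 2*K) * q^N"
  proof -
    have "card Dall \<le> 1 + K * (2 * q^N)" using A sA by (meson add_le_mono le_refl mult_le_mono2 order_trans)
    also have "\<dots> \<le> (1 + 2*K) * q^N" using q1 by (simp add: algebra_simps)
    finally show ?thesis .
  qed
  have gl: "q^N \<le> 2 * card Dg"
    using good_lower[OF p l k] finite_subset[of Dg Dall] A unfolding Dg_def Dall_def q_def N_def by auto
  have gs: "card Dg \<le> card Dall"
    using A by (intro card_mono) (auto simp: Dg_def Dall_def)
  have Bdv: "\<forall>D\<in>Db. \<forall>i\<le>k. \<forall>j\<le>k. int p ^ 1 dvd D i j"
    using not_unit_dvd[OF p l] unfolding Db_def q_def by (auto simp: good_dmat)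
  have B: "finite Db \<and> card Db \<le> 1 + K * (\<Sum>v\<in>{1..<l}. (p^(l-v))^N)"
    using cover_card[OF p l k, of Db 1] Bdv unfolding Db_def q_def N_def K_def by auto
  have sB: "(\<Sum>v\<in>{1..<l}. (p^(l-v))^N) \<le> 2 * (p^N)^(l-1)"
    unfolding pw by (rule geom_bound1[OF pN l])
  have q2: "1 \<le> (p^N)^(l-1)" using prime_gt_0_nat[OF p] by simp
  have bB: "card Db \<le> (1 + 2*K) * (p^N)^(l-1)"
  proof -
    have "card Db \<le> 1 + K * (2 * (p^N)^(l-1))" using B sB by (meson add_le_mono le_refl mult_le_mono2 order_trans)
    also have "\<dots> \<le> (1 + 2*K) * (p^N)^(l-1)" using q2 by (simp add: algebra_simps)
    finally show ?thesis .
  qed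
  show "card (config_classes (p^l) k) \<le> (1 + 2*((k+1)*(k+1))) * (p^l)^(2*k-1)"
    using cA bA unfolding q_def N_def K_def by simp
  show "(p^l)^(2*k-1) \<le> 2 * card (good_classes (p^l) k)"
    using cG gl unfolding q_def N_def by simp
  show "card (good_classes (p^l) k) \<le> card (config_classes (p^l) k)"
    using cG cA gs unfolding q_def by simp
  show "card (bad_classes (p^l) k) \<le> (1 + 2*((k+1)*(k+1))) * (p^(2*k-1))^(l-1)"
    using cB bB unfolding q_def N_def K_def by simp
qed

theorem theorem6p1:
  fixes k :: nat
  assumes "k \<ge> 1"
  shows "(\<exists>C>0. \<forall>(p::nat) l. prime p \<and> odd p \<and> l \<ge> 1 \<longrightarrow>
            real (card (config_classes (p ^ l) k)) \<le> C * real (p ^ l) ^ (2 * k - 1) \<and>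
            real (p ^ l) ^ (2 * k - 1) \<le> C * real (card (config_classes (p ^ l) k)))
       \<and> (\<exists>C>0. \<forall>(p::nat) l. prime p \<and> odd p \<and> l \<ge> 1 \<longrightarrow>
            real (card (good_classes (p ^ l) k)) \<le> C * real (p ^ l) ^ (2 * k - 1) \<and>
            real (p ^ l) ^ (2 * k - 1) \<le> C * real (card (good_classes (p ^ l) k)))
       \<and> (\<forall>\<epsilon>>0. \<exists>P. \<forall>(p::nat) l. prime p \<and> odd p \<and> p \<ge> P \<and> l \<ge> 1 \<longrightarrow>
            real (card (bad_classes (p ^ l) k)) \<le> \<epsilon> * real (p ^ l) ^ (2 * k - 1))"
proof -
  define K :: nat where "K = 1 + 2*((k+1)*(k+1))"
  define C :: real where "C = real K + 2"
  have C0: "C > 0" unfolding C_def by simp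
  have R: "real (card (config_classes (p ^ l) k)) \<le> C * real (p ^ l) ^ (2 * k - 1) \<and>
            real (p ^ l) ^ (2 * k - 1) \<le> C * real (card (config_classes (p ^ l) k)) \<and>
           real (card (good_classes (p ^ l) k)) \<le> C * real (p ^ l) ^ (2 * k - 1) \<and>
            real (p ^ l) ^ (2 * k - 1) \<le> C * real (card (good_classes (p ^ l) k))"
    if p: "prime p" and l: "l \<ge> 1" for p l
  proof -
    note c = counts[OF p l assms]
    define T where "T = real (p ^ l) ^ (2 * k - 1)"
    define A where "A = real (card (config_classes (p ^ l) k))"
    define G where "G = real (card (good_classes (p ^ l) k))"
    have T0: "T \<ge> 0" unfolding T_def by simp
    have 1: "A \<le> real K * T" using c(1) unfolding A_def T_def K_def
      by (metis of_nat_le_iff of_nat_mult of_nat_power)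
    have 2: "T \<le> 2 * G" using c(2) unfolding G_def T_def
      by (metis of_nat_le_iff of_nat_mult of_nat_power of_nat_numeral)
    have 3: "G \<le> A" using c(3) unfolding G_def A_def by simp
    have CK: "real K \<le> C" "2 \<le> C" unfolding C_def by auto
    have f1: "A \<le> C * T" using 1 CK T0 by (meson mult_right_mono order_trans)
    have f2: "G \<le> C * T" using 3 f1 by linarith
    have G0: "G \<ge> 0" unfolding G_def by simp
    have "2 * G \<le> C * G" using CK(2) G0 by (rule mult_right_mono)
    then have f3: "T \<le> C * G" using 2 by linarith
    have "C * G \<le> C * A" using 3 C0 by simp
    then have f4: "T \<le> C * A" using f3 by linarith
    show ?thesis using f1 f2 f3 f4 unfolding A_def G_def T_def by blast
  qed
  have bad: "\<exists>P. \<forall>(p::nat) l. prime p \<and> odd p \<and> p \<ge> P \<and> l \<ge> 1 \<longrightarrow>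
            real (card (bad_classes (p ^ l) k)) \<le> \<epsilon> * real (p ^ l) ^ (2 * k - 1)" if e: "\<epsilon> > 0" for \<epsilon> :: real
  proof (intro exI[of _ "nat \<lceil>real K / \<epsilon>\<rceil>"] allI impI, elim conjE)
    fix p l :: nat assume p: "prime p" and "odd p" and pP: "nat \<lceil>real K / \<epsilon>\<rceil> \<le> p" and l: "1 \<le> l"
    note c = counts[OF p l assms]
    define N where "N = 2*k-1"
    define M where "M = real (p^N) ^ (l-1)"
    have M0: "M \<ge> 0" unfolding M_def by simp
    have b: "real (card (bad_classes (p ^ l) k)) \<le> real K * M" using c(4) unfolding M_def K_def N_def
      by (metis of_nat_le_iff of_nat_mult of_nat_power)
    have "real K / \<epsilon> \<le> real p" using pP by linarith
    then have Kp: "real K \<le> \<epsilon> * real p" using e by (simp add: divide_le_eq mult.commute)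
    have pN: "real p \<le> real (p^N)" using prime_gt_0_nat[OF p] assms unfolding N_def
      by (simp add: self_le_power)
    have T: "real (p ^ l) ^ N = real (p^N) * M"
    proof -
      have "(p^l)^N = p^N * (p^N)^(l-1)" using l
        by (metis (no_types) power_mult mult.commute power_Suc Suc_pred' not_one_le_zero le_zero_eq neq0_conv
            linorder_not_le)
      then show ?thesis unfolding M_def by (metis of_nat_mult of_nat_power)
    qed
    have "real K * M \<le> \<epsilon> * real p * M" using Kp M0 by (simp add: mult_right_mono)
    also have "\<dots> \<le> \<epsilon> * real (p^N) * M" using pN e M0 by (simp add: mult_left_mono mult_right_mono)
    finally show "real (card (bad_classes (p ^ l) k)) \<le> \<epsilon> * real (p ^ l) ^ (2 * k - 1)"
      using b T unfolding N_def by (simp add: mult.assoc)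
  qed
  show ?thesis using R bad C0 by blast
qed

end
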